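(* Let $a,b>0$ with $ab\geqslant \frac14 e^2$ and set $c:=\frac{e}{e-1}$. Then $$x\geqslant \left(2^{\log 16}(ab)^{\log(16ab)}\right)^{c^2a}\ \Longrightarrow\ \log x\geqslant a\left(\log(b\log x)\right)^2.$$ *)

theory Defs
  imports "HOL-Analysis.Analysis"
begin

end

theory Submission
  imports Defs
begin

theorem lemma1:
  fixes a b x c :: real
  assumes "a > 0" and "b > 0"
    and "a * b \<ge> exp 1 ^ 2 / 4"
    and "c = exp 1 / (exp 1 - 1)"
    and "x \<ge> (2 powr (ln 16) * (a * b) powr (ln (16 * a * b))) powr (c ^ 2 * a)"
  shows "ln x \<ge> a * (ln (b * ln x)) ^ 2"
proof -
  define e where "e = exp (1::real)"
  have e1: "e > 1" unfolding e_def by simp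
  have ab: "a * b > 0" using assms by simp
  define s where "s = ln (4 * a * b)"
  have s2: "s \<ge> 2"
  proof -
    have "exp 2 \<le> 4 * a * b" proof -
      have "exp 2 = exp 1 * (exp 1::real)" by (metis exp_add one_add_one)
      thus ?thesis using assms(3) by (simp add: power2_eq_square)
    qed
    hence "ln (exp 2) \<le> s" unfolding s_def using ab by (subst ln_le_cancel_iff) auto
    thus ?thesis by simp
  qed
  have ce: "c = e / (e - 1)" using assms(4) e_def by simp
  have c1: "c > 1" unfolding ce using e1 by (simp add: less_divide_eq)
  have base: "2 powr (ln 16) * (a * b) powr (ln (16 * a * b)) = exp (s^2)"
  proof -
    have l16: "ln (16::real) = 4 * ln 2"
      using ln_realpow[of 2 4] by simp
    have l4: "ln (4::real) = 2 * ln 2"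
      using ln_realpow[of 2 2] by simp
    have h1: "ln (16 * a * b) = 4 * ln 2 + ln (a*b)" using assms(1,2) l16 by (simp add: ln_mult mult.assoc)
    have h2: "s = 2 * ln 2 + ln (a*b)" unfolding s_def using assms(1,2) l4 by (simp add: ln_mult mult.assoc)
    have h3: "2 powr (ln 16) * (a * b) powr (ln (16 * a * b))
       = exp (ln 16 * ln 2 + ln (16 * a * b) * ln (a*b))"
      using ab assms(1,2) by (simp add: powr_def exp_add)
    have h4: "ln 16 * ln 2 + ln (16 * a * b) * ln (a*b) = s^2"
      unfolding h1 h2 l16 by algebra
    show ?thesis unfolding h3 h4 ..
  qed
  have xb: "x \<ge> exp (c^2 * a * s^2)"
    using assms(5) unfolding base by (simp add: powr_def mult.commute)
  have xpos: "x > 0" using xb by (metis exp_gt_zero less_le_trans)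
  define L where "L = ln x"
  have L: "L \<ge> c^2 * a * s^2" using xb xpos unfolding L_def
    by (metis ln_exp ln_le_cancel_iff exp_gt_zero)
  define u0 where "u0 = c * s"
  define u where "u = sqrt (L / a)"
  have u0: "u0 \<ge> 2" using c1 s2 unfolding u0_def
    using mult_mono[of 1 c 2 s] by simp
  have "L / a \<ge> u0^2" using L assms(1) unfolding u0_def by (simp add: field_simps power_mult_distrib)
  hence uu0: "u \<ge> u0" unfolding u_def using u0 by (metis real_le_rsqrt)
  have Lu: "L = a * u^2" unfolding u_def using L assms(1)
  proof -
    have "0 \<le> c^2 * a * s^2" using assms(1) by simp
    hence "0 \<le> L" using L by linarith
    hence "0 \<le> L / a" using assms(1) by simp
    hence "(sqrt (L / a))^2 = L / a" by simp
    thus "L = a * (sqrt (L / a))^2" using assms(1) by simp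
  qed
  have upos: "u > 0" using uu0 u0 by simp
  have lnbL: "ln (b * L) = ln (a*b) + 2 * ln u"
    using Lu assms(1,2) upos by (simp add: ln_mult ln_realpow algebra_simps)
  have nonneg: "ln (b * L) \<ge> 0"
  proof -
    have "a*b \<ge> 1" using assms(3) e1 unfolding e_def
    proof -
      have "exp 1 \<ge> (2::real)" using exp_ge_add_one_self[of "1::real"] by simp
      hence "exp 1 * exp 1 \<ge> (2::real) * 2" by (intro mult_mono) auto
      thus ?thesis using assms(3) by (simp add: power2_eq_square)
    qed
    moreover have "u^2 \<ge> 1" using uu0 u0 by (simp add: one_le_power)
    ultimately show ?thesis unfolding Lu using mult_mono[of 1 "a*b" 1 "u^2"] by (simp add: algebra_simps)
  qed
  have mono: "2 * (ln u - ln u0) \<le> u - u0"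
  proof -
    have "ln (u / u0) \<le> u / u0 - 1" using upos u0 by (intro ln_le_minus_one) simp
    hence "ln u - ln u0 \<le> (u - u0) / u0" using upos u0 by (simp add: ln_div diff_divide_distrib)
    also have "\<dots> \<le> (u - u0) / 2" using uu0 u0 by (intro divide_left_mono) auto
    finally show ?thesis by simp
  qed
  define t where "t = s / (2 * (e - 1))"
  have tpos: "t > 0" unfolding t_def using s2 e1 by simp
  have key: "u0 - 2 * ln u0 \<ge> s - ln 4"
  proof -
    have lnt: "ln t \<le> t - 1" using tpos by (rule ln_le_minus_one)
    have "u0 = e * 2 * t" unfolding u0_def ce t_def using e1 by (simp add: field_simps)
    hence "ln u0 = 1 + ln 2 + ln t" using tpos e1 unfolding e_def by (simp add: ln_mult)
    moreover have "s = 2 * (e - 1) * t" unfolding t_def using e1 by simp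
    moreover have "ln (4::real) = 2 * ln 2" using ln_realpow[of 2 2] by simp
    moreover note \<open>u0 = e * 2 * t\<close>
    ultimately show ?thesis using lnt by (simp add: algebra_simps)
  qed
  have "ln (a*b) = s - ln 4" unfolding s_def using assms(1,2) by (simp add: ln_mult mult.assoc)
  hence le: "ln (b * L) \<le> u" using lnbL key mono by (smt (verit))
  have "(ln (b * L))^2 \<le> u^2" using nonneg le by (simp add: power_mono)
  hence "a * (ln (b * L))^2 \<le> a * u^2" using assms(1) by simp
  thus ?thesis using Lu L_def by simp
qed

end
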